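(* Let $p\ge 3$ be an integer and let $n\ge p+2$ be an integer. Then $\mathrm{conv}^{\leq p}(DW_n)\ge \frac{p-1}{(p-2)^2+1}\cdot(n-2)$.
   Context: For $n\ge 5$, the double wheel $DW_n$ is the graph obtained from a cycle on $n-2$ vertices by adding two new vertices, each adjacent to all vertices of the cycle (the two new vertices are not adjacent to each other). For an oriented graph $D$ and $X\subseteq V(D)$, the inversion of $X$ reverses every arc with both endvertices in $X$; a $(\leq p)$-inversion is the inversion of a set of at most $p$ vertices. $\mathrm{conv}^{\leq p}(G)$ is the minimum number of $(\leq p)$-inversions transforming an orientation of $G$ into its converse (all arcs reversed); it does not depend on the orientation. *)

theory Defs
  imports Complex_Main
begin

text \<open>The double wheel DW_n has vertex set {0..<n}: the cycle
  0,1,...,n-3 (on n-2 vertices) and two hubs n-2 and n-1, each adjacent to all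
  cycle vertices (the hubs are not adjacent).\<close>

definition DW_edges :: "nat \<Rightarrow> nat set set" where
  "DW_edges n =
     {{i, Suc i mod (n - 2)} | i. i < n - 2} \<union>
     {{h, i} | h i. h \<in> {n - 2, n - 1} \<and> i < n - 2}"

definition is_orientation :: "nat set set \<Rightarrow> (nat \<times> nat) set \<Rightarrow> bool" where
  "is_orientation E D \<longleftrightarrow>
     (\<forall>(u, v) \<in> D. u \<noteq> v \<and> {u, v} \<in> E) \<and>
     (\<forall>u v. u \<noteq> v \<and> {u, v} \<in> E \<longrightarrow> (u, v) \<in> D \<or> (v, u) \<in> D) \<and>
     (\<forall>u v. (u, v) \<in> D \<longrightarrow> (v, u) \<notin> D)"

definition invert :: "nat set \<Rightarrow> (nat \<times> nat) set \<Rightarrow> (nat \<times> nat) set" where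
  "invert X D =
     {(u, v). (u, v) \<in> D \<and> \<not> (u \<in> X \<and> v \<in> X)} \<union>
     {(u, v). (v, u) \<in> D \<and> u \<in> X \<and> v \<in> X}"

definition conv_le :: "nat \<Rightarrow> nat set \<Rightarrow> (nat \<times> nat) set \<Rightarrow> nat" where
  "conv_le p V D =
     (LEAST k. \<exists>Xs. length Xs = k \<and> (\<forall>X \<in> set Xs. X \<subseteq> V \<and> card X \<le> p) \<and>
                     foldl (\<lambda>D' X. invert X D') D Xs = converse D)"

end

theory Submission
  imports Defs
begin

definition cnt :: "nat set list \<Rightarrow> nat \<Rightarrow> nat \<Rightarrow> nat" where
  "cnt Xs a b = length (filter (\<lambda>X. a \<in> X \<and> b \<in> X) Xs)"

lemma cnt_sym: "cnt Xs a b = cnt Xs b a"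
  unfolding cnt_def by (simp add: conj_commute)

lemma cnt_snoc: "cnt (Xs @ [X]) a b = cnt Xs a b + (if a \<in> X \<and> b \<in> X then 1 else 0)"
  unfolding cnt_def by simp

lemma fold_char:
  "(a, b) \<in> foldl (\<lambda>D' X. invert X D') D Xs \<longleftrightarrow>
     ((a, b) \<in> D \<and> even (cnt Xs a b)) \<or> ((b, a) \<in> D \<and> odd (cnt Xs a b))"
proof (induction Xs arbitrary: a b rule: rev_induct)
  case Nil
  then show ?case by (simp add: cnt_def)
next
  case (snoc X Xs)
  have IH2: "(b, a) \<in> foldl (\<lambda>D' X. invert X D') D Xs \<longleftrightarrow>
     ((b, a) \<in> D \<and> even (cnt Xs a b)) \<or> ((a, b) \<in> D \<and> odd (cnt Xs a b))"
    using snoc.IH[of b a] cnt_sym by metis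
  show ?case
    using snoc.IH[of a b] IH2 by (auto simp add: invert_def cnt_snoc)
qed

lemma odd_cover:
  assumes "foldl (\<lambda>D' X. invert X D') D Xs = converse D" "(a,b) \<in> D" "(b,a) \<notin> D"
  shows "odd (cnt Xs a b)"
proof -
  have "(b,a) \<in> foldl (\<lambda>D' X. invert X D') D Xs" using assms by simp
  then show ?thesis using fold_char[of b a D Xs] assms cnt_sym by metis
qed

lemma edge_cover:
  assumes "is_orientation E D" "foldl (\<lambda>D' X. invert X D') D Xs = converse D"
    "{a,b} \<in> E" "a \<noteq> b"
  shows "1 \<le> cnt Xs a b"
proof -
  have "(a,b) \<in> D \<or> (b,a) \<in> D" and as: "\<forall>u v. (u, v) \<in> D \<longrightarrow> (v, u) \<notin> D"
    using assms unfolding is_orientation_def by (auto simp: insert_commute)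
  then have "odd (cnt Xs a b)" using odd_cover[OF assms(2)] cnt_sym by metis
  then show ?thesis by (cases "cnt Xs a b") auto
qed

lemma exists_seq:
  assumes "is_orientation E D" "finite D" "\<forall>(u,v)\<in>D. u \<in> V \<and> v \<in> V" "2 \<le> p"
  shows "\<exists>Xs. (\<forall>X \<in> set Xs. X \<subseteq> V \<and> card X \<le> p) \<and> foldl (\<lambda>D' X. invert X D') D Xs = converse D"
proof -
  define E' where "E' = (\<lambda>(u,v). {u,v}) ` D"
  have "finite E'" using assms(2) by (simp add: E'_def)
  then obtain xs where xs: "set xs = E'" "distinct xs" using finite_distinct_list by blast
  have as: "\<forall>u v. (u, v) \<in> D \<longrightarrow> (v, u) \<notin> D" using assms(1) unfolding is_orientation_def by auto
  have c1: "cnt xs a b = 1" if "(a,b) \<in> D \<or> (b,a) \<in> D" for a b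
  proof -
    have ab: "a \<noteq> b" using assms(1) that unfolding is_orientation_def by auto
    have "{X. a \<in> X \<and> b \<in> X} \<inter> E' = {{a,b}}"
      using ab that unfolding E'_def by (auto simp: insert_commute)
    moreover have "cnt xs a b = card ({X. a \<in> X \<and> b \<in> X} \<inter> set xs)"
      unfolding cnt_def using distinct_length_filter[OF xs(2)] by blast
    ultimately show ?thesis using xs(1) by simp
  qed
  have "foldl (\<lambda>D' X. invert X D') D xs = converse D"
  proof (intro set_eqI, clarify)
    fix a b
    show "((a, b) \<in> foldl (\<lambda>D' X. invert X D') D xs) = ((a, b) \<in> converse D)"
      unfolding fold_char using c1[of a b] as by auto
  qed
  moreover have "\<forall>X \<in> set xs. X \<subseteq> V \<and> card X \<le> p"
  proof
    fix X assume "X \<in> set xs"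
    then obtain u v where "(u,v) \<in> D" "X = {u,v}" using xs(1) unfolding E'_def by auto
    then show "X \<subseteq> V \<and> card X \<le> p" using assms(3,4)
      by (cases "u = v") auto
  qed
  ultimately show ?thesis by blast
qed


lemma sum_list_swap:
  "sum_list (map (\<lambda>X. \<Sum>i\<in>I. f i X) Xs) = (\<Sum>i\<in>I. sum_list (map (f i) Xs))"
  by (induction Xs) (simp_all add: sum.distrib)

lemma sum_list_bound:
  "(\<forall>x\<in>set xs. f x \<le> (B::nat)) \<Longrightarrow> sum_list (map f xs) \<le> length xs * B"
  by (induction xs) auto

lemma sum_list_ind:
  "sum_list (map (\<lambda>X. c * (if P X then 1 else 0) + (if Q X then 1 else 0) + (if R X then 1 else 0)) Xs)
   = c * length (filter P Xs) + length (filter Q Xs) + length (filter R Xs)"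
  by (induction Xs) (auto simp: algebra_simps)

lemma cyc_closed:
  assumes "0 < m" "i0 < m" "i0 \<in> X" "\<forall>i<m. i \<in> X \<longrightarrow> Suc i mod m \<in> X"
  shows "{..<m} \<subseteq> X"
proof -
  have k: "(i0 + k) mod m \<in> X" for k
  proof (induction k)
    case 0 then show ?case using assms by simp
  next
    case (Suc k)
    have "(i0 + Suc k) mod m = Suc ((i0 + k) mod m) mod m" by (simp add: mod_Suc_eq)
    then show ?case using Suc assms(1,4) by simp
  qed
  show ?thesis
  proof
    fix j assume "j \<in> {..<m}"
    then have "j = (i0 + (m - i0 + j)) mod m" using assms(2) by simp
    then show "j \<in> X" using k by metis
  qed
qed

lemma ce_bound:
  assumes "0 < card (X \<inter> {..<m})" "card (X \<inter> {..<m}) < m"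
  shows "card {i. i < m \<and> i \<in> X \<and> Suc i mod m \<in> X} < card (X \<inter> {..<m})"
proof -
  have "\<exists>i<m. i \<in> X \<and> Suc i mod m \<notin> X"
  proof (rule ccontr)
    assume "\<not> ?thesis"
    then have cl: "\<forall>i<m. i \<in> X \<longrightarrow> Suc i mod m \<in> X" by auto
    from assms(1) obtain i0 where "i0 \<in> X \<inter> {..<m}"
      by (metis card.empty ex_in_conv less_irrefl)
    then have "{..<m} \<subseteq> X" using cyc_closed[OF _ _ _ cl] assms by auto
    then have "X \<inter> {..<m} = {..<m}" by auto
    then show False using assms(2) by simp
  qed
  then obtain i where "i<m" "i\<in>X" "Suc i mod m \<notin> X" by auto
  then have "{i. i < m \<and> i \<in> X \<and> Suc i mod m \<in> X} \<subset> X \<inter> {..<m}" by auto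
  then show ?thesis by (intro psubset_card_mono) auto
qed

definition val :: "nat \<Rightarrow> nat \<Rightarrow> nat set \<Rightarrow> nat" where
  "val m p X = (\<Sum>i<m. (p-3) * (if i \<in> X \<and> Suc i mod m \<in> X then 1 else 0)
        + (if m \<in> X \<and> i \<in> X then 1 else 0) + (if Suc m \<in> X \<and> i \<in> X then 1 else 0))"

lemma sum_ind_card: "(\<Sum>i<(m::nat). if P i then 1 else (0::nat)) = card {i. i < m \<and> P i}"
proof -
  have "{..<m} \<inter> {x. P x} = {i. i < m \<and> P i}" by auto
  then show ?thesis by (simp add: sum.If_cases)
qed

lemma val_eq:
  "val m p X = (p-3) * card {i. i < m \<and> i \<in> X \<and> Suc i mod m \<in> X}
      + (if m \<in> X then card (X \<inter> {..<m}) else 0) + (if Suc m \<in> X then card (X \<inter> {..<m}) else 0)"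
proof -
  have c: "card (X \<inter> {..<m}) = card {i. i < m \<and> i \<in> X}"
    by (rule arg_cong[where f=card]) auto
  have 1: "(\<Sum>i<m. (p-3) * (if i \<in> X \<and> Suc i mod m \<in> X then 1 else 0))
     = (p-3) * card {i. i < m \<and> i \<in> X \<and> Suc i mod m \<in> X}"
    by (simp only: sum_distrib_left[symmetric] sum_ind_card)
  have 2: "(\<Sum>i<m. (if h \<in> X \<and> i \<in> X then 1 else 0)) = (if h \<in> X then card (X \<inter> {..<m}) else 0)" for h
    unfolding c by (cases "h \<in> X") (simp_all only: sum_ind_card, simp_all)
  show ?thesis
    unfolding val_def sum.distrib 1 2 ..
qed


lemma val_bound:
  assumes "3 \<le> p" "p \<le> m" "X \<subseteq> {..<Suc (Suc m)}" "card X \<le> p" "\<not> (m = p \<and> 6 \<le> p)"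
  shows "val m p X \<le> (p-2)^2 + 1"
proof -
  define c where "c = card (X \<inter> {..<m})"
  define CE where "CE = card {i. i<m \<and> i\<in>X \<and> Suc i mod m \<in> X}"
  define h where "h = (if m\<in>X then 1 else 0) + (if Suc m \<in> X then 1 else (0::nat))"
  have v: "val m p X = (p-3)*CE + h*c" unfolding val_eq c_def CE_def h_def by simp
  have fX: "finite X" using assms(3) finite_subset by blast
  have CEc: "CE \<le> c" unfolding CE_def c_def by (rule card_mono) auto
  have cm: "c \<le> m" unfolding c_def using card_mono[of "{..<m}" "X \<inter> {..<m}"] by auto
  have hc: "card (X \<inter> {m, Suc m}) = h" unfolding h_def by (cases "m \<in> X"; cases "Suc m \<in> X") auto
  have "card ((X \<inter> {..<m}) \<union> (X \<inter> {m, Suc m})) = c + h"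
    unfolding c_def hc[symmetric] using fX by (intro card_Un_disjoint) auto
  moreover have "card ((X \<inter> {..<m}) \<union> (X \<inter> {m, Suc m})) \<le> card X"
    using fX by (intro card_mono) auto
  ultimately have ch: "c + h \<le> p" using assms(4) by simp
  have h2: "h \<le> 2" unfolding h_def by simp
  obtain q where q: "p = q + 3" using assms(1) by (metis add.commute le_Suc_ex)
  show ?thesis
  proof (cases "c = 0")
    case True
    then show ?thesis using v CEc by simp
  next
    case c0: False
    show ?thesis
    proof (cases "c = m")
      case True
      then have "h = 0" "m = p" using ch assms(2) by auto
      then have "p \<le> 5" using assms(5) by auto
      then have "p = 3 \<or> p = 4 \<or> p = 5" using assms(1) by auto
      moreover have "val m p X \<le> (p-3)*p" using v \<open>h = 0\<close> CEc True \<open>m = p\<close> by simp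
      ultimately show ?thesis by auto
    next
      case False
      then have "CE < c" using ce_bound[of X m] c0 cm unfolding c_def CE_def by simp
      then have CE1: "CE \<le> c - 1" by simp
      have "h = 0 \<or> h = 1 \<or> h = 2" using h2 by auto
      moreover {
        assume "h = 0"
        then have "val m p X \<le> q * (c - 1)" using v q CE1 by simp
        also have "\<dots> \<le> q * (q + 2)" using ch q by (intro mult_le_mono2) simp
        finally have ?thesis using q by (simp add: power2_eq_square algebra_simps)
      } moreover {
        assume "h = 1"
        then have "val m p X \<le> q * (c - 1) + c" using v q CE1 by simp
        also have "\<dots> \<le> q * (q + 1) + (q + 2)" using ch q \<open>h = 1\<close> by (intro add_mono mult_le_mono2) simp_all
        finally have ?thesis using q by (simp add: power2_eq_square algebra_simps)
      } moreover {
        assume "h = 2"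
        then have "val m p X \<le> q * (c - 1) + 2 * c" using v q CE1 by simp
        also have "\<dots> \<le> q * q + 2 * (q + 1)" using ch q \<open>h = 2\<close> by (intro add_mono mult_le_mono2) simp_all
        finally have ?thesis using q by (simp add: power2_eq_square algebra_simps)
      }
      ultimately show ?thesis by blast
    qed
  qed
qed


lemma lower:
  assumes "3 \<le> p" "p \<le> m" "\<forall>X\<in>set Xs. X \<subseteq> {..<Suc(Suc m)} \<and> card X \<le> p"
    "\<forall>i<m. 1 \<le> cnt Xs i (Suc i mod m) \<and> 1 \<le> cnt Xs m i \<and> 1 \<le> cnt Xs (Suc m) i"
  shows "(real p - 1) / ((real p - 2)^2 + 1) * real m \<le> real (length Xs)"
proof (cases "m = p \<and> 6 \<le> p")
  case True
  have "2 \<le> length Xs"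
  proof (rule ccontr)
    assume "\<not> 2 \<le> length Xs"
    then have "length Xs \<le> 1" by simp
    then have "Xs = [] \<or> (\<exists>X. Xs = [X])" by (cases Xs) auto
    moreover have "Xs \<noteq> []" using assms(4)[rule_format, of 0] True by (auto simp: cnt_def)
    ultimately obtain X where X: "Xs = [X]" by auto
    have "{..<Suc(Suc m)} \<subseteq> X"
    proof
      fix v assume "v \<in> {..<Suc (Suc m)}"
      then have "v < m \<or> v = m \<or> v = Suc m" by auto
      moreover have "0 < m" using True by simp
      ultimately show "v \<in> X" using assms(4) X by (auto simp: cnt_def split: if_splits)
    qed
    moreover have "finite X" "card X \<le> p" using assms(3) X finite_subset by auto
    ultimately have "Suc (Suc m) \<le> p" using card_mono[of X "{..<Suc(Suc m)}"] by simp
    then show False using True by simp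
  qed
  have r6: "6 \<le> real p" using True by simp
  have den: "0 < (real p - 2)^2 + 1" using zero_le_power2[of "real p - 2"] by linarith
  have "(real p - 1) * real p \<le> 2 * ((real p - 2)^2 + 1)"
  proof -
    have "0 \<le> (real p - 2) * (real p - 5)" using r6 by simp
    then show ?thesis by (simp add: power2_eq_square algebra_simps)
  qed
  then have "(real p - 1) / ((real p - 2)^2 + 1) * real p \<le> 2"
    using den by (simp add: divide_le_eq mult.commute mult.left_commute)
  also have "2 \<le> real (length Xs)" using \<open>2 \<le> length Xs\<close> by simp
  finally show ?thesis using True by simp
next
  case False
  define B where "B = (p-2)^2 + (1::nat)"
  have "sum_list (map (val m p) Xs) =
     (\<Sum>i<m. sum_list (map (\<lambda>X. (p-3) * (if i \<in> X \<and> Suc i mod m \<in> X then 1 else 0)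
        + (if m \<in> X \<and> i \<in> X then 1 else 0) + (if Suc m \<in> X \<and> i \<in> X then 1 else 0)) Xs))"
    unfolding val_def by (rule sum_list_swap)
  also have "\<dots> = (\<Sum>i<m. (p-3) * cnt Xs i (Suc i mod m) + cnt Xs m i + cnt Xs (Suc m) i)"
    unfolding sum_list_ind cnt_def ..
  also have "\<dots> \<ge> (\<Sum>i<m. p - 1)"
  proof (rule sum_mono)
    fix i assume "i \<in> {..<m}"
    then have "1 \<le> cnt Xs i (Suc i mod m)" "1 \<le> cnt Xs m i" "1 \<le> cnt Xs (Suc m) i" using assms(4) by auto
    moreover have "(p-3) * 1 \<le> (p-3) * cnt Xs i (Suc i mod m)" using calculation(1) by (rule mult_le_mono2)
    ultimately show "p - 1 \<le> (p-3) * cnt Xs i (Suc i mod m) + cnt Xs m i + cnt Xs (Suc m) i"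
      using assms(1) by linarith
  qed
  finally have lo: "m * (p - 1) \<le> sum_list (map (val m p) Xs)" by (simp add: mult.commute)
  have "sum_list (map (val m p) Xs) \<le> length Xs * B"
    unfolding B_def using assms val_bound False by (intro sum_list_bound) auto
  with lo have "m * (p - 1) \<le> length Xs * B" by linarith
  then have "real (m * (p - 1)) \<le> real (length Xs * B)" by (rule of_nat_mono)
  moreover have "real (p - 1) = real p - 1" "real (p - 2) = real p - 2" using assms(1) by auto
  ultimately have ineq: "real m * (real p - 1) \<le> real (length Xs) * ((real p - 2)^2 + 1)"
    unfolding B_def by (simp add: distrib_left)
  have den: "0 < (real p - 2)^2 + 1" using zero_le_power2[of "real p - 2"] by linarith
  show ?thesis using ineq den by (simp add: divide_le_eq mult.commute mult.left_commute)
qed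


theorem mainTheorem19:
  fixes p n :: nat and D :: "(nat \<times> nat) set"
  assumes "p \<ge> 3" and "n \<ge> p + 2"
    and "is_orientation (DW_edges n) D"
  shows "real (conv_le p {..<n} D) \<ge>
           (real p - 1) / ((real p - 2)^2 + 1) * (real n - 2)"
proof -
  define m where "m = n - 2"
  have nm: "n = Suc (Suc m)" and pm: "p \<le> m" using assms(1,2) unfolding m_def by auto
  have m3: "3 \<le> m" using pm assms(1) by simp
  have Esub: "e \<subseteq> {..<n}" if "e \<in> DW_edges n" for e
  proof -
    have "Suc i mod m < Suc (Suc m)" for i using m3
      by (meson less_SucI mod_less_divisor order.strict_trans zero_less_numeral less_le_trans)
    then show ?thesis using that nm unfolding DW_edges_def by auto
  qed
  have DV: "\<forall>(u,v)\<in>D. u \<in> {..<n} \<and> v \<in> {..<n}"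
    using assms(3) Esub unfolding is_orientation_def by blast
  have "D \<subseteq> {..<n} \<times> {..<n}" using DV by auto
  then have fD: "finite D" by (rule finite_subset) simp
  obtain Xs1 where "\<forall>X \<in> set Xs1. X \<subseteq> {..<n} \<and> card X \<le> p"
      "foldl (\<lambda>D' X. invert X D') D Xs1 = converse D"
    using exists_seq[OF assms(3) fD DV, of p] assms(1) by auto
  then have ex: "\<exists>k Xs. length Xs = k \<and> (\<forall>X \<in> set Xs. X \<subseteq> {..<n} \<and> card X \<le> p) \<and>
       foldl (\<lambda>D' X. invert X D') D Xs = converse D" by blast
  obtain Xs where Xs: "length Xs = conv_le p {..<n} D" "\<forall>X \<in> set Xs. X \<subseteq> {..<n} \<and> card X \<le> p"
      "foldl (\<lambda>D' X. invert X D') D Xs = converse D"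
    using LeastI_ex[OF ex] unfolding conv_le_def by blast
  have cov: "\<forall>i<m. 1 \<le> cnt Xs i (Suc i mod m) \<and> 1 \<le> cnt Xs m i \<and> 1 \<le> cnt Xs (Suc m) i"
  proof (intro allI impI conjI)
    fix i assume i: "i < m"
    have "{i, Suc i mod (n - 2)} \<in> DW_edges n" using i unfolding DW_edges_def m_def by blast
    moreover have "i \<noteq> Suc i mod m" using i m3 by (cases "Suc i = m") auto
    ultimately show "1 \<le> cnt Xs i (Suc i mod m)"
      using edge_cover[OF assms(3) Xs(3)] unfolding m_def by blast
    have "{n - 2, i} \<in> DW_edges n" using i unfolding DW_edges_def m_def by blast
    then show "1 \<le> cnt Xs m i"
      using edge_cover[OF assms(3) Xs(3)] i unfolding m_def by fastforce
    have "{n - 1, i} \<in> DW_edges n" using i unfolding DW_edges_def m_def by blast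
    moreover have "n - 1 = Suc m" using nm by simp
    ultimately show "1 \<le> cnt Xs (Suc m) i"
      using edge_cover[OF assms(3) Xs(3)] i by fastforce
  qed
  have "(real p - 1) / ((real p - 2)^2 + 1) * real m \<le> real (length Xs)"
    using lower[OF assms(1) pm _ cov] Xs(2) nm by simp
  moreover have "real m = real n - 2" using nm by simp
  ultimately show ?thesis using Xs(1) by simp
qed

end
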